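(* Let $A=[a_{ij}]$ be the adjacency matrix of a strongly connected, aperiodic directed graph on $\mathcal X=\{1,\ldots,n\}$, and let $N\ge1$ be such that all entries of $A^N$ are positive. Let $\lambda_A$ be the spectral radius of $A$, $u,v$ positive vectors with $A^Tu=\lambda_Au$, $Av=\lambda_Av$, $\sum_iu_iv_i=1$, $\nu_{RB}(i)=u_iv_i$, $r_{ij}=\frac{v_j}{\lambda_Av_i}a_{ij}$, and $\mathfrak M_{\rm RB}(x_0,\ldots,x_N)=\nu_{RB}(x_0)r_{x_0x_1}\cdots r_{x_{N-1}x_N}$. Let $\mu_0$ be a measure on $\mathcal X$ with $\mu_0(x)>0$ for all $x$ and $\mathfrak M(x_0,\ldots,x_N)=\mu_0(x_0)a_{x_0x_1}\cdots a_{x_{N-1}x_N}$. Then $\mathfrak M_{\rm RB}$ is the solution of the problem of minimizing $\mathbb D(P\|\mathfrak M)$ over all probability distributions $P$ on $\mathcal X^{N+1}$ whose marginals at times $0$ and $N$ both equal $\nu_{RB}$.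
   Context: Relative entropy of a probability distribution $P$ with respect to a nonnegative measure $Q$ on a finite set: $\mathbb D(P\|Q)=\sum_x P(x)\log\frac{P(x)}{Q(x)}$ if $\mathrm{supp}(P)\subseteq\mathrm{supp}(Q)$ (with $0\log0=0$), and $+\infty$ otherwise. *)

theory Defs
  imports Complex_Main "HOL-Library.Extended_Real"
begin

definition mat_mult :: "('x::finite \<Rightarrow> 'x \<Rightarrow> real) \<Rightarrow> ('x \<Rightarrow> 'x \<Rightarrow> real) \<Rightarrow> 'x \<Rightarrow> 'x \<Rightarrow> real" where
  "mat_mult A B i j = (\<Sum>k\<in>UNIV. A i k * B k j)"

fun mat_pow :: "('x::finite \<Rightarrow> 'x \<Rightarrow> real) \<Rightarrow> nat \<Rightarrow> 'x \<Rightarrow> 'x \<Rightarrow> real" where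
  "mat_pow A 0 = (\<lambda>i j. if i = j then 1 else 0)"
| "mat_pow A (Suc k) = mat_mult (mat_pow A k) A"

text \<open>A is the adjacency matrix of a directed graph: entries in {0,1}; edge i->j iff A i j = 1.\<close>
definition adjacency_matrix :: "('x \<Rightarrow> 'x \<Rightarrow> real) \<Rightarrow> bool" where
  "adjacency_matrix A \<longleftrightarrow> (\<forall>i j. A i j = 0 \<or> A i j = 1)"

definition walk :: "('x \<Rightarrow> 'x \<Rightarrow> real) \<Rightarrow> nat \<Rightarrow> 'x \<Rightarrow> 'x \<Rightarrow> bool" where
  "walk A k i j \<longleftrightarrow> (\<exists>xs. length xs = Suc k \<and> xs ! 0 = i \<and> xs ! k = j \<and>
      (\<forall>t<k. A (xs ! t) (xs ! Suc t) = 1))"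

definition strongly_connected :: "('x \<Rightarrow> 'x \<Rightarrow> real) \<Rightarrow> bool" where
  "strongly_connected A \<longleftrightarrow> (\<forall>i j. \<exists>k. walk A k i j)"

definition aperiodic :: "('x \<Rightarrow> 'x \<Rightarrow> real) \<Rightarrow> bool" where
  "aperiodic A \<longleftrightarrow> Gcd {k. k > 0 \<and> (\<exists>i. walk A k i i)} = (1::nat)"

definition is_eigenvalue :: "('x::finite \<Rightarrow> 'x \<Rightarrow> real) \<Rightarrow> complex \<Rightarrow> bool" where
  "is_eigenvalue A z \<longleftrightarrow> (\<exists>w::'x \<Rightarrow> complex. w \<noteq> (\<lambda>_. 0) \<and>
      (\<forall>i. (\<Sum>j\<in>UNIV. complex_of_real (A i j) * w j) = z * w i))"

definition spectral_radius :: "('x::finite \<Rightarrow> 'x \<Rightarrow> real) \<Rightarrow> real" where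
  "spectral_radius A = Sup (cmod ` {z. is_eigenvalue A z})"

definition rel_entropy :: "'a set \<Rightarrow> ('a \<Rightarrow> real) \<Rightarrow> ('a \<Rightarrow> real) \<Rightarrow> ereal" where
  "rel_entropy S P Q =
     (if \<forall>x\<in>S. P x \<noteq> 0 \<longrightarrow> Q x \<noteq> 0
      then ereal (\<Sum>x\<in>S. if P x = 0 then 0 else P x * ln (P x / Q x))
      else \<infinity>)"

text \<open>Paths x_0,...,x_N represented as lists of length N+1.\<close>
definition paths :: "nat \<Rightarrow> 'x list set" where
  "paths N = {xs. length xs = Suc N}"

definition is_prob_dist :: "'a set \<Rightarrow> ('a \<Rightarrow> real) \<Rightarrow> bool" where
  "is_prob_dist S P \<longleftrightarrow> (\<forall>x\<in>S. P x \<ge> 0) \<and> (\<Sum>x\<in>S. P x) = 1"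

definition marginal :: "nat \<Rightarrow> nat \<Rightarrow> ('x list \<Rightarrow> real) \<Rightarrow> 'x \<Rightarrow> real" where
  "marginal N t P i = (\<Sum>xs\<in>{xs\<in>paths N. xs ! t = i}. P xs)"

end

theory Submission
  imports Defs
begin


lemma finite_paths: "finite (paths N :: 'x::finite list set)"
proof -
  have "paths N = {xs::'x list. set xs \<subseteq> UNIV \<and> length xs = Suc N}" by (auto simp: paths_def)
  thus ?thesis using finite_lists_length_eq[OF finite_UNIV] by simp
qed

lemma marg_sum:
  fixes P :: "'x::finite list \<Rightarrow> real"
  shows "(\<Sum>xs\<in>paths N. P xs * f (xs!t)) = (\<Sum>i\<in>UNIV. marginal N t P i * f i)"
proof -
  have "(\<Sum>i\<in>UNIV. marginal N t P i * f i) = (\<Sum>i\<in>UNIV. \<Sum>xs\<in>{xs\<in>paths N. xs ! t = i}. P xs * f (xs!t))"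
    unfolding marginal_def sum_distrib_right by (intro sum.cong refl) auto
  also have "\<dots> = (\<Sum>xs\<in>paths N. P xs * f (xs!t))"
    by (rule sum.group) (auto simp: finite_paths)
  finally show ?thesis by simp
qed

lemma prod01:
  assumes "adjacency_matrix A" "finite T"
  shows "(\<Prod>t\<in>T. A (f t) (g t)) = 0 \<or> (\<Prod>t\<in>T. A (f t) (g t)) = 1"
  using assms(2)
proof (induction T rule: finite_induct)
  case (insert x F)
  have h: "A (f x) (g x) = 0 \<or> A (f x) (g x) = 1" using assms(1) unfolding adjacency_matrix_def by blast
  have "(\<Prod>t\<in>insert x F. A (f t) (g t)) = A (f x) (g x) * (\<Prod>t\<in>F. A (f t) (g t))"
    using insert.hyps by (rule prod.insert)
  then show ?case using h insert.IH by auto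
qed simp

lemma telescope:
  assumes "\<forall>i. v i \<noteq> (0::real)"
  shows "(\<Prod>t<n. v (xs!Suc t) / v (xs!t)) = v (xs!n) / v (xs!0)"
proof (induction n)
  case (Suc n)
  have "(\<Prod>t<Suc n. v (xs!Suc t) / v (xs!t)) = (\<Prod>t<n. v (xs!Suc t) / v (xs!t)) * (v (xs!Suc n) / v (xs!n))"
    by (rule prod.lessThan_Suc)
  also have "\<dots> = v (xs!n) / v (xs!0) * (v (xs!Suc n) / v (xs!n))"
    by (simp only: Suc.IH)
  also have "\<dots> = v (xs!Suc n) / v (xs!0)"
  proof -
    have "v (xs!n) \<noteq> 0" using assms by blast
    then show ?thesis by simp
  qed
  finally show ?case .
qed (simp add: assms[rule_format])

lemma walk_sum:
  fixes A :: "'x::finite \<Rightarrow> 'x \<Rightarrow> real"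
  shows "(\<Sum>xs\<in>{xs\<in>paths N. xs!0 = i \<and> xs!N = j}. \<Prod>t<N. A (xs!t) (xs!Suc t)) = mat_pow A N i j"
proof (induction N arbitrary: j)
  case 0
  have "{xs\<in>paths 0. xs!0 = i \<and> xs!0 = j} = (if i = j then {[i]} else {})"
    by (auto simp: paths_def length_Suc_conv)
  then show ?case by simp
next
  case (Suc N)
  let ?F = "\<lambda>xs. \<Prod>t<N. A (xs!t) (xs!Suc t)"
  have sb: "(\<Sum>ys\<in>{ys\<in>paths N. ys!0 = i}. ?F ys * A (ys!N) j) =
     (\<Sum>xs\<in>{xs\<in>paths (Suc N). xs!0 = i \<and> xs!Suc N = j}. \<Prod>t<Suc N. A (xs!t) (xs!Suc t))"
  proof (rule sum.reindex_bij_witness[where j = "\<lambda>ys. ys @ [j]" and i = butlast])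
    fix b assume b: "b \<in> {xs\<in>paths (Suc N). xs!0 = i \<and> xs!Suc N = j}"
    have len: "length b = Suc (Suc N)" "b!Suc N = j" using b by (auto simp: paths_def)
    then have "b \<noteq> []" by auto
    moreover have "last b = j" using len \<open>b \<noteq> []\<close> by (simp add: last_conv_nth)
    ultimately show "butlast b @ [j] = b" by (metis append_butlast_last_id)
    show "butlast b \<in> {ys\<in>paths N. ys!0 = i}" using b by (auto simp: paths_def nth_butlast)
  next
    fix a assume a: "a \<in> {ys\<in>paths N. ys!0 = i}"
    show "butlast (a @ [j]) = a" by simp
    show "a @ [j] \<in> {xs\<in>paths (Suc N). xs!0 = i \<and> xs!Suc N = j}"
      using a by (auto simp: paths_def nth_append)
    have "(\<Prod>t<Suc N. A ((a@[j])!t) ((a@[j])!Suc t)) = (\<Prod>t<N. A ((a@[j])!t) ((a@[j])!Suc t)) * A ((a@[j])!N) ((a@[j])!Suc N)"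
      by simp
    also have "(\<Prod>t<N. A ((a@[j])!t) ((a@[j])!Suc t)) = ?F a"
      using a by (intro prod.cong refl) (auto simp: paths_def nth_append)
    finally show "(\<Prod>t<Suc N. A ((a@[j])!t) ((a@[j])!Suc t)) = ?F a * A (a!N) j"
      using a by (simp add: paths_def nth_append)
  qed
  have "(\<Sum>xs\<in>{xs\<in>paths (Suc N). xs!0 = i \<and> xs!Suc N = j}. \<Prod>t<Suc N. A (xs!t) (xs!Suc t))
      = (\<Sum>ys\<in>{ys\<in>paths N. ys!0 = i}. ?F ys * A (ys!N) j)" using sb by simp
  also have "\<dots> = (\<Sum>k\<in>UNIV. \<Sum>ys\<in>{ys\<in>{ys\<in>paths N. ys!0 = i}. ys!N = k}. ?F ys * A (ys!N) j)"
    by (rule sum.group[symmetric]) (auto simp: finite_paths)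
  also have "\<dots> = (\<Sum>k\<in>UNIV. (\<Sum>ys\<in>{ys\<in>paths N. ys!0 = i \<and> ys!N = k}. ?F ys) * A k j)"
    unfolding sum_distrib_right by (intro sum.cong) auto
  also have "\<dots> = mat_pow A (Suc N) i j"
    using Suc by (simp add: mat_mult_def)
  finally show ?case .
qed

lemma gibbs:
  fixes P Q :: "'a \<Rightarrow> real"
  assumes S: "finite S" and P0: "\<forall>x\<in>S. P x \<ge> 0" and P1: "(\<Sum>x\<in>S. P x) = 1"
    and Q0: "\<forall>x\<in>S. Q x \<ge> 0" and Q1: "(\<Sum>x\<in>S. Q x) = 1"
    and PQ: "\<forall>x\<in>S. P x \<noteq> 0 \<longrightarrow> Q x > 0"
  shows "(\<Sum>x\<in>S. if P x = 0 then 0 else P x * ln (P x / Q x)) \<ge> 0"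
    and "(\<Sum>x\<in>S. if P x = 0 then 0 else P x * ln (P x / Q x)) = 0 \<Longrightarrow> \<forall>x\<in>S. P x = Q x"
proof -
  define T where "T x = (if P x = 0 then Q x else Q x - P x + P x * ln (P x / Q x))" for x
  have T0: "T x \<ge> 0" if "x \<in> S" for x
  proof (cases "P x = 0")
    case False
    then have p: "P x > 0" and q: "Q x > 0" using P0 PQ that by force+
    have "ln (Q x / P x) \<le> Q x / P x - 1" using p q by (intro ln_le_minus_one) simp
    then have "P x * ln (Q x / P x) \<le> P x * (Q x / P x - 1)" using p by (intro mult_left_mono) auto
    moreover have "ln (Q x / P x) = - ln (P x / Q x)" using p q by (simp add: ln_div)
    ultimately show ?thesis using False p by (simp add: T_def algebra_simps)
  qed (use Q0 that in \<open>simp add: T_def\<close>)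
  have eq: "(\<Sum>x\<in>S. T x) = (\<Sum>x\<in>S. if P x = 0 then 0 else P x * ln (P x / Q x))"
  proof -
    have "(\<Sum>x\<in>S. T x) = (\<Sum>x\<in>S. Q x - P x + (if P x = 0 then 0 else P x * ln (P x / Q x)))"
      by (intro sum.cong) (auto simp: T_def)
    also have "\<dots> = (\<Sum>x\<in>S. if P x = 0 then 0 else P x * ln (P x / Q x))"
      by (simp add: sum.distrib sum_subtractf P1 Q1)
    finally show ?thesis .
  qed
  show "(\<Sum>x\<in>S. if P x = 0 then 0 else P x * ln (P x / Q x)) \<ge> 0"
    unfolding eq[symmetric] by (intro sum_nonneg T0)
  assume "(\<Sum>x\<in>S. if P x = 0 then 0 else P x * ln (P x / Q x)) = 0"
  then have "(\<Sum>x\<in>S. T x) = 0" using eq by simp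
  then have Tz: "\<forall>x\<in>S. T x = 0" using sum_nonneg_eq_0_iff[OF S] T0 by blast
  show "\<forall>x\<in>S. P x = Q x"
  proof
    fix x assume x: "x \<in> S"
    show "P x = Q x"
    proof (cases "P x = 0")
      case True
      have "T x = 0" using Tz x by blast
      then show ?thesis using True by (simp add: T_def)
    next
      case False
      then have p: "P x > 0" and q: "Q x > 0" using P0 PQ x by force+
      have "T x = 0" using Tz x by blast
      then have "Q x - P x + P x * ln (P x / Q x) = 0" using False by (simp add: T_def)
      moreover have "ln (P x / Q x) = - ln (Q x / P x)" using p q by (simp add: ln_div)
      ultimately have "P x * ln (Q x / P x) = P x * (Q x / P x - 1)" using p by (simp add: algebra_simps)
      then have "ln (Q x / P x) = Q x / P x - 1" using p by simp
      then have "Q x / P x = 1" by (intro ln_eq_minus_one) (use p q in auto)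
      then show ?thesis using p by simp
    qed
  qed
qed



theorem proposition4p2:
  fixes A :: "'x::finite \<Rightarrow> 'x \<Rightarrow> real"
    and N :: nat and u v mu0 :: "'x \<Rightarrow> real" and lam :: real
    and nuRB :: "'x \<Rightarrow> real" and r :: "'x \<Rightarrow> 'x \<Rightarrow> real"
    and MRB M :: "'x list \<Rightarrow> real"
  assumes adj: "adjacency_matrix A"
    and sc: "strongly_connected A"
    and ap: "aperiodic A"
    and N: "N \<ge> 1" "\<forall>i j. mat_pow A N i j > 0"
    and lam: "lam = spectral_radius A"
    and upos: "\<forall>i. u i > 0" and vpos: "\<forall>i. v i > 0"
    and ueig: "\<forall>j. (\<Sum>i\<in>UNIV. A i j * u i) = lam * u j"
    and veig: "\<forall>i. (\<Sum>j\<in>UNIV. A i j * v j) = lam * v i"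
    and norm: "(\<Sum>i\<in>UNIV. u i * v i) = 1"
    and nuRB: "\<forall>i. nuRB i = u i * v i"
    and r: "\<forall>i j. r i j = v j / (lam * v i) * A i j"
    and MRB: "\<forall>xs. MRB xs = nuRB (xs ! 0) * (\<Prod>t<N. r (xs ! t) (xs ! Suc t))"
    and mu0: "\<forall>x. mu0 x > 0"
    and M: "\<forall>xs. M xs = mu0 (xs ! 0) * (\<Prod>t<N. A (xs ! t) (xs ! Suc t))"
  shows "is_prob_dist (paths N) MRB \<and> marginal N 0 MRB = nuRB \<and> marginal N N MRB = nuRB
    \<and> (\<forall>P. is_prob_dist (paths N) P \<and> marginal N 0 P = nuRB \<and> marginal N N P = nuRB
          \<longrightarrow> rel_entropy (paths N) MRB M \<le> rel_entropy (paths N) P M)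
    \<and> (\<forall>P. is_prob_dist (paths N) P \<and> marginal N 0 P = nuRB \<and> marginal N N P = nuRB
          \<and> rel_entropy (paths N) P M = rel_entropy (paths N) MRB M
          \<longrightarrow> (\<forall>xs\<in>paths N. P xs = MRB xs))"
proof -
  define S where "S = (paths N :: 'x list set)"
  have finS: "finite S" unfolding S_def by (rule finite_paths)
  define a where "a xs = (\<Prod>t<N. A (xs!t) (xs!Suc t))" for xs
  have a01: "a xs = 0 \<or> a xs = 1" for xs unfolding a_def by (rule prod01[OF adj]) simp
  have lampos: "lam > 0"
  proof (rule ccontr)
    assume "\<not> lam > 0"
    have Az: "A i j = 0" for i j
    proof -
      have nn: "\<forall>k\<in>UNIV. A i k * v k \<ge> 0"
      proof
        fix k
        have "A i k = 0 \<or> A i k = 1" using adj unfolding adjacency_matrix_def by blast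
        then have "A i k \<ge> 0" by auto
        moreover have "v k \<ge> 0" using vpos less_imp_le by blast
        ultimately show "A i k * v k \<ge> 0" by simp
      qed
      have "lam * v i \<le> 0" using \<open>\<not> lam > 0\<close> vpos by (simp add: mult_nonpos_nonneg less_imp_le)
      then have "(\<Sum>k\<in>UNIV. A i k * v k) \<le> 0" using veig by simp
      moreover have "(\<Sum>k\<in>UNIV. A i k * v k) \<ge> 0" using nn by (intro sum_nonneg) auto
      ultimately have "(\<Sum>k\<in>UNIV. A i k * v k) = 0" by linarith
      then have "A i j * v j = 0" using sum_nonneg_eq_0_iff[of UNIV "\<lambda>k. A i k * v k"] nn by simp
      then show ?thesis using vpos by (metis less_irrefl mult_eq_0_iff)
    qed
    obtain k where k: "N = Suc k" using N(1) by (cases N) auto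
    have "mat_pow A N i j = 0" for i j unfolding k by (simp add: mat_mult_def Az)
    then show False using N(2) by (metis less_irrefl)
  qed
  define w where "w xs = u (xs!0) * v (xs!N) / lam^N" for xs
  have wpos: "w xs > 0" for xs unfolding w_def using upos vpos lampos by simp
  have MRBw: "MRB xs = w xs * a xs" for xs
  proof -
    have "(\<Prod>t<N. r (xs ! t) (xs ! Suc t)) = (\<Prod>t<N. (v (xs!Suc t) / v (xs!t)) * (1/lam) * A (xs!t) (xs!Suc t))"
      using r by (intro prod.cong refl) auto
    also have "\<dots> = (\<Prod>t<N. v (xs!Suc t) / v (xs!t)) * (1/lam)^N * a xs"
      unfolding a_def prod.distrib by simp
    also have "\<dots> = v (xs!N) / v (xs!0) * (1/lam)^N * a xs"
      using telescope[where v=v and n=N and xs=xs] vpos by (metis less_irrefl)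
    finally have "MRB xs = u (xs!0) * v (xs!0) * (v (xs!N) / v (xs!0) * (1/lam)^N * a xs)"
      using MRB nuRB by simp
    moreover have "v (xs!0) \<noteq> 0" using vpos by (metis less_irrefl)
    ultimately show ?thesis unfolding w_def by (simp add: power_one_over)
  qed
  have Ma: "M xs = mu0 (xs!0) * a xs" for xs using M a_def by simp
  have vN: "(\<Sum>j\<in>UNIV. mat_pow A n i j * v j) = lam^n * v i" for n i
  proof (induction n arbitrary: i)
    case 0
    have "(\<Sum>j\<in>UNIV. mat_pow A 0 i j * v j) = (\<Sum>j\<in>UNIV. if i = j then v j else 0)"
      by (intro sum.cong) auto
    then show ?case by simp
  next
    case (Suc n)
    have "(\<Sum>j\<in>UNIV. mat_pow A (Suc n) i j * v j) = (\<Sum>j\<in>UNIV. \<Sum>l\<in>UNIV. mat_pow A n i l * (A l j * v j))"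
      by (simp add: mat_mult_def sum_distrib_right mult.assoc)
    also have "\<dots> = (\<Sum>l\<in>UNIV. \<Sum>j\<in>UNIV. mat_pow A n i l * (A l j * v j))" by (rule sum.swap)
    also have "\<dots> = (\<Sum>l\<in>UNIV. mat_pow A n i l * (\<Sum>j\<in>UNIV. A l j * v j))"
      by (simp add: sum_distrib_left)
    also have "\<dots> = lam * (\<Sum>l\<in>UNIV. mat_pow A n i l * v l)"
      using veig by (simp add: sum_distrib_left mult_ac)
    finally show ?case using Suc by simp
  qed
  have uN: "(\<Sum>i\<in>UNIV. u i * mat_pow A n i j) = lam^n * u j" for n j
  proof (induction n arbitrary: j)
    case 0
    have "(\<Sum>i\<in>UNIV. u i * mat_pow A 0 i j) = (\<Sum>i\<in>UNIV. if i = j then u i else 0)"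
      by (intro sum.cong) auto
    then show ?case by simp
  next
    case (Suc n)
    have "(\<Sum>i\<in>UNIV. u i * mat_pow A (Suc n) i j) = (\<Sum>i\<in>UNIV. \<Sum>l\<in>UNIV. u i * mat_pow A n i l * A l j)"
      by (simp add: mat_mult_def sum_distrib_left mult.assoc)
    also have "\<dots> = (\<Sum>l\<in>UNIV. \<Sum>i\<in>UNIV. u i * mat_pow A n i l * A l j)" by (rule sum.swap)
    also have "\<dots> = (\<Sum>l\<in>UNIV. (\<Sum>i\<in>UNIV. u i * mat_pow A n i l) * A l j)"
      by (simp add: sum_distrib_right)
    also have "\<dots> = lam^n * (\<Sum>l\<in>UNIV. A l j * u l)"
      using Suc by (simp add: sum_distrib_left mult_ac)
    finally show ?case using ueig by simp
  qed
  have lamN: "lam^N \<noteq> 0" using lampos by simp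
  have marg0: "marginal N 0 MRB i = nuRB i" for i
  proof -
    have "marginal N 0 MRB i = (\<Sum>j\<in>UNIV. \<Sum>xs\<in>{xs\<in>{xs\<in>S. xs!0 = i}. xs!N = j}. MRB xs)"
      unfolding marginal_def S_def by (rule sum.group[symmetric]) (auto simp: finite_paths)
    also have "\<dots> = (\<Sum>j\<in>UNIV. u i * v j / lam^N * (\<Sum>xs\<in>{xs\<in>paths N. xs!0 = i \<and> xs!N = j}. a xs))"
      unfolding sum_distrib_left S_def MRBw w_def by (intro sum.cong) auto
    also have "\<dots> = (\<Sum>j\<in>UNIV. u i / lam^N * (mat_pow A N i j * v j))"
      unfolding a_def walk_sum by (intro sum.cong) auto
    also have "\<dots> = u i * v i" unfolding sum_distrib_left[symmetric] vN using lampos by simp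
    finally show ?thesis using nuRB by simp
  qed
  have margN: "marginal N N MRB j = nuRB j" for j
  proof -
    have "marginal N N MRB j = (\<Sum>i\<in>UNIV. \<Sum>xs\<in>{xs\<in>{xs\<in>S. xs!N = j}. xs!0 = i}. MRB xs)"
      unfolding marginal_def S_def by (rule sum.group[symmetric]) (auto simp: finite_paths)
    also have "\<dots> = (\<Sum>i\<in>UNIV. u i * v j / lam^N * (\<Sum>xs\<in>{xs\<in>paths N. xs!0 = i \<and> xs!N = j}. a xs))"
      unfolding sum_distrib_left S_def MRBw w_def by (intro sum.cong) (auto intro!: sum.cong)
    also have "\<dots> = (\<Sum>i\<in>UNIV. v j / lam^N * (u i * mat_pow A N i j))"
      unfolding a_def walk_sum by (intro sum.cong) auto
    also have "\<dots> = u j * v j" unfolding sum_distrib_left[symmetric] uN using lampos by simp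
    finally show ?thesis using nuRB by simp
  qed
  have MRBnn: "\<forall>xs\<in>S. MRB xs \<ge> 0" 
  proof
    fix xs show "MRB xs \<ge> 0" using MRBw[of xs] wpos[of xs] a01[of xs] by auto
  qed
  have sumMRB: "(\<Sum>xs\<in>S. MRB xs) = 1"
  proof -
    have "(\<Sum>xs\<in>paths N. MRB xs) = (\<Sum>i\<in>UNIV. marginal N 0 MRB i)"
      using marg_sum[where P=MRB and N=N and f="\<lambda>_. 1" and t=0] by simp
    also have "\<dots> = 1" using marg0 nuRB norm by simp
    finally show ?thesis unfolding S_def .
  qed
  have m0: "marginal N 0 MRB = nuRB" using marg0 by (rule ext)
  have mN: "marginal N N MRB = nuRB" using margN by (rule ext)
  have probMRB: "is_prob_dist (paths N) MRB" using MRBnn sumMRB unfolding is_prob_dist_def S_def by simp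
  define K where "K = (\<Sum>i\<in>UNIV. nuRB i * (ln (u i) - ln (mu0 i))) + (\<Sum>j\<in>UNIV. nuRB j * ln (v j)) - N * ln lam"
  define E where "E P = (\<Sum>xs\<in>S. if P xs = 0 then 0 else P xs * ln (P xs / MRB xs))" for P
  have decomp: "rel_entropy S P M = ereal (E P + K)"
    if P: "is_prob_dist S P" "marginal N 0 P = nuRB" "marginal N N P = nuRB"
      and supp: "\<forall>xs\<in>S. P xs \<noteq> 0 \<longrightarrow> M xs \<noteq> 0" for P
  proof -
    define phi where "phi xs = (ln (u (xs!0)) - ln (mu0 (xs!0))) + ln (v (xs!N)) - N * ln lam" for xs
    have trm: "(if P xs = 0 then 0 else P xs * ln (P xs / M xs)) =
       (if P xs = 0 then 0 else P xs * ln (P xs / MRB xs)) + P xs * phi xs" if xs: "xs \<in> S" for xs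
    proof (cases "P xs = 0")
      case False
      then have "M xs \<noteq> 0" using supp xs by blast
      then have a1: "a xs = 1" using a01 Ma by force
      have pp: "P xs > 0" using P(1) False xs unfolding is_prob_dist_def by force
      have u0: "u (xs!0) > 0" and v0: "v (xs!N) > 0" and m0: "mu0 (xs!0) > 0"
        using upos vpos mu0 by auto
      have lN: "lam^N > 0" using lampos by simp
      have e1: "M xs = mu0 (xs!0)" "MRB xs = u (xs!0) * v (xs!N) / lam^N"
        using a1 Ma MRBw w_def by auto
      have l1: "ln (P xs / M xs) = ln (P xs) - ln (mu0 (xs!0))" using e1 pp m0 by (simp add: ln_divide_pos)
      have "ln (u (xs!0) * v (xs!N) / lam^N) = ln (u (xs!0) * v (xs!N)) - ln (lam^N)"
        using u0 v0 lN by (intro ln_divide_pos) auto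
      also have "ln (u (xs!0) * v (xs!N)) = ln (u (xs!0)) + ln (v (xs!N))" using u0 v0 by (rule ln_mult_pos)
      also have "ln (lam^N) = N * ln lam" by (rule ln_realpow)
      finally have l2: "ln (u (xs!0) * v (xs!N) / lam^N) = ln (u (xs!0)) + ln (v (xs!N)) - N * ln lam" .
      have mp: "MRB xs > 0" using e1 u0 v0 lN by simp
      have "ln (P xs / MRB xs) = ln (P xs) - ln (MRB xs)" using pp mp by (rule ln_divide_pos)
      then have "ln (P xs / MRB xs) = ln (P xs) - ln (u (xs!0) * v (xs!N) / lam^N)"
        using e1 by simp
      then have "ln (P xs / M xs) = ln (P xs / MRB xs) + phi xs"
        using l1 l2 unfolding phi_def by simp
      then show ?thesis using False by (simp add: algebra_simps)
    qed simp
    have "(\<Sum>xs\<in>S. P xs * phi xs) = K"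
    proof -
      have "(\<Sum>xs\<in>S. P xs * phi xs) = (\<Sum>xs\<in>S. P xs * (ln (u (xs!0)) - ln (mu0 (xs!0))))
          + (\<Sum>xs\<in>S. P xs * ln (v (xs!N))) - N * ln lam * (\<Sum>xs\<in>S. P xs)"
      proof -
        have "(\<Sum>xs\<in>S. P xs * phi xs) = (\<Sum>xs\<in>S. (P xs * (ln (u (xs!0)) - ln (mu0 (xs!0))) + P xs * ln (v (xs!N))) - N * ln lam * P xs)"
          by (intro sum.cong refl) (simp add: phi_def algebra_simps)
        then show ?thesis by (simp add: sum.distrib sum_subtractf sum_distrib_left)
      qed
      also have "\<dots> = K"
        using marg_sum[where P=P and N=N and f="\<lambda>i. ln (u i) - ln (mu0 i)" and t=0] marg_sum[where P=P and N=N and f="\<lambda>i. ln (v i)" and t=N]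
          marg_sum[where P=P and N=N and f="\<lambda>_. 1" and t=0] P norm nuRB unfolding S_def K_def is_prob_dist_def by simp
      finally show ?thesis .
    qed
    moreover have "rel_entropy S P M = ereal (\<Sum>xs\<in>S. if P xs = 0 then 0 else P xs * ln (P xs / M xs))"
      using supp unfolding rel_entropy_def by simp
    moreover have "(\<Sum>xs\<in>S. if P xs = 0 then 0 else P xs * ln (P xs / M xs)) =
        (\<Sum>xs\<in>S. (if P xs = 0 then 0 else P xs * ln (P xs / MRB xs)) + P xs * phi xs)"
      by (rule sum.cong[OF refl trm])
    ultimately show ?thesis unfolding E_def sum.distrib by simp
  qed
  have suppMRB: "\<forall>xs\<in>S. MRB xs \<noteq> 0 \<longrightarrow> M xs \<noteq> 0" 
  proof (intro ballI impI)
    fix xs assume "MRB xs \<noteq> 0"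
    then have "a xs \<noteq> 0" using MRBw[of xs] by auto
    then show "M xs \<noteq> 0" using Ma[of xs] mu0 by (metis less_irrefl mult_eq_0_iff)
  qed
  have EMRB: "E MRB = 0" unfolding E_def by (intro sum.neutral) auto
  have relMRB: "rel_entropy S MRB M = ereal K"
  proof -
    have "rel_entropy S MRB M = ereal (E MRB + K)"
      by (rule decomp) (use probMRB m0 mN suppMRB in \<open>simp_all add: S_def\<close>)
    then show ?thesis using EMRB by simp
  qed
  have gib: "E P \<ge> 0 \<and> (E P = 0 \<longrightarrow> (\<forall>xs\<in>S. P xs = MRB xs))"
    if P: "is_prob_dist S P" and supp: "\<forall>xs\<in>S. P xs \<noteq> 0 \<longrightarrow> M xs \<noteq> 0" for P
  proof -
    have PQ: "\<forall>xs\<in>S. P xs \<noteq> 0 \<longrightarrow> MRB xs > 0"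
    proof (intro ballI impI)
      fix xs assume "xs \<in> S" "P xs \<noteq> 0"
      then have "M xs \<noteq> 0" using supp by blast
      then have "a xs = 1" using a01 Ma by force
      then show "MRB xs > 0" using MRBw wpos by simp
    qed
    show ?thesis using gibbs[OF finS _ _ MRBnn sumMRB PQ] P unfolding is_prob_dist_def E_def by blast
  qed
  have main: "rel_entropy S MRB M \<le> rel_entropy S P M \<and>
      (rel_entropy S P M = rel_entropy S MRB M \<longrightarrow> (\<forall>xs\<in>S. P xs = MRB xs))"
    if P: "is_prob_dist S P" "marginal N 0 P = nuRB" "marginal N N P = nuRB" for P
  proof (cases "\<forall>xs\<in>S. P xs \<noteq> 0 \<longrightarrow> M xs \<noteq> 0")
    case True
    then show ?thesis using decomp[OF P True] gib[OF P(1) True] relMRB by auto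
  next
    case False
    then have "rel_entropy S P M = \<infinity>" unfolding rel_entropy_def by auto
    then show ?thesis using relMRB by simp
  qed
  show ?thesis
  proof (intro conjI allI impI)
    show "is_prob_dist (paths N) MRB" by (rule probMRB)
    show "marginal N 0 MRB = nuRB" by (rule m0)
    show "marginal N N MRB = nuRB" by (rule mN)
  next
    fix P assume h: "is_prob_dist (paths N) P \<and> marginal N 0 P = nuRB \<and> marginal N N P = nuRB"
    then show "rel_entropy (paths N) MRB M \<le> rel_entropy (paths N) P M"
      using main[of P] unfolding S_def by blast
  next
    fix P assume h: "is_prob_dist (paths N) P \<and> marginal N 0 P = nuRB \<and> marginal N N P = nuRB
          \<and> rel_entropy (paths N) P M = rel_entropy (paths N) MRB M"
    then show "\<forall>xs\<in>paths N. P xs = MRB xs"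
      using main[of P] unfolding S_def by blast
  qed
qed

end
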